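(* Suppose $v_0=v^*$. Then for any two time steps $0\le a<b\le n$, $$\|P\widehat v_b-P\widehat v_a\|_2^2\le 50\cdot\alpha\cdot\log(\|v_b\|_2/\|v_a\|_2).$$
   Context: Setting: $\phi(x_1),\dots,\phi(x_n)\in\mathbb{R}^d$ are feature vectors of samples $x_1,\dots,x_n$; $\eta\in(0,0.1)$; $\beta\ge\alpha>0$; $v^*\in\mathbb{R}^d$ satisfies $\|v^*\|_2=1$, $\eta\sum_{i=1}^n\langle v^*,\phi(x_i)\rangle^2=\beta$, and $\eta\sum_{i=1}^n\langle w,\phi(x_i)\rangle^2\le\alpha$ for every $w$ with $\|w\|_2\le1$ and $\langle w,v^*\rangle=0$. $P=I-v^*(v^* )^\top$. The iterates are $v_i=v_{i-1}+\eta\langle\phi(x_i),v_{i-1}\rangle\phi(x_i)$ for $i\in[n]$, and $\widehat v_i=v_i/\|v_i\|_2$. $\log$ is the natural logarithm. *)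

theory Defs
  imports "HOL-Analysis.Analysis"
begin

definition proj_perp :: "'a::real_inner \<Rightarrow> 'a \<Rightarrow> 'a" where
  "proj_perp vs y = y - (vs \<bullet> y) *\<^sub>R vs"

definition unit_dir :: "'a::real_normed_vector \<Rightarrow> 'a" where
  "unit_dir y = y /\<^sub>R norm y"

end

theory Submission
  imports Defs
begin

theorem lemmaC2:
  fixes phi :: "'b \<Rightarrow> 'a::euclidean_space"
    and x :: "nat \<Rightarrow> 'b"
    and n :: nat
    and eta alpha beta :: real
    and vs :: 'a
    and v :: "nat \<Rightarrow> 'a"
    and a b :: nat
  assumes eta_pos: "0 < eta" and eta_small: "eta < 0.1"
    and alpha_pos: "0 < alpha" and alpha_le_beta: "alpha \<le> beta"
    and vs_unit: "norm vs = 1"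
    and top_dir: "eta * (\<Sum>i=1..n. (vs \<bullet> phi (x i))\<^sup>2) = beta"
    and gap: "\<And>w. norm w \<le> 1 \<Longrightarrow> w \<bullet> vs = 0 \<Longrightarrow>
                eta * (\<Sum>i=1..n. (w \<bullet> phi (x i))\<^sup>2) \<le> alpha"
    and v_step: "\<And>i. i \<in> {1..n} \<Longrightarrow>
                v i = v (i - 1) + (eta * (phi (x i) \<bullet> v (i - 1))) *\<^sub>R phi (x i)"
    and v0: "v 0 = vs"
    and ab: "a < b" and bn: "b \<le> n"
  shows "(norm (proj_perp vs (unit_dir (v b)) - proj_perp vs (unit_dir (v a))))\<^sup>2
           \<le> 50 * alpha * ln (norm (v b) / norm (v a))"
proof -
  define P where "P = proj_perp vs"
  define g where "g i = phi (x i) \<bullet> v (i - 1)" for i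
  have vsvs: "vs \<bullet> vs = 1" using vs_unit by (simp add: dot_square_norm)
  have Pdiff: "P (y - z) = P y - P z" for y z
    unfolding P_def proj_perp_def by (simp add: inner_diff_right algebra_simps)
  have Pscale: "P (c *\<^sub>R y) = c *\<^sub>R P y" for c y
    unfolding P_def proj_perp_def by (simp add: algebra_simps)
  have Pvs: "P y \<bullet> vs = 0" for y
    unfolding P_def proj_perp_def by (simp add: inner_diff_right vsvs inner_commute)
  have Pvs0: "P vs = 0"
    unfolding P_def proj_perp_def by (simp add: vsvs)
  have Pinner: "z \<bullet> P y = z \<bullet> y" if "z \<bullet> vs = 0" for z y
    unfolding P_def proj_perp_def using that by (simp add: inner_diff_right)
  have step: "norm (v i)^2 = norm (v (i-1))^2 + 2*eta*(g i)^2 + eta^2*(g i)^2*norm(phi(x i))^2"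
    if "i \<in> {1..n}" for i
  proof -
    have "norm (v i)^2 = v i \<bullet> v i" by (simp add: dot_square_norm)
    also have "\<dots> = (v (i-1) + (eta * g i) *\<^sub>R phi (x i)) \<bullet> (v (i-1) + (eta * g i) *\<^sub>R phi (x i))"
      using v_step[OF that] by (simp add: g_def)
    also have "\<dots> = v (i-1) \<bullet> v (i-1) + 2 * (eta * g i) * (phi (x i) \<bullet> v (i-1))
        + (eta * g i)^2 * (phi (x i) \<bullet> phi (x i))"
      by (simp add: inner_add_left inner_add_right inner_commute power2_eq_square algebra_simps)
    also have "\<dots> = norm (v (i-1))^2 + 2*eta*(g i)^2 + eta^2*(g i)^2*norm(phi(x i))^2"
      by (simp add: dot_square_norm g_def power2_eq_square algebra_simps)
    finally show ?thesis .
  qed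
  have mono: "norm (v a')^2 + 2 * (\<Sum>i\<in>{a'<..b'}. eta * (g i)^2) \<le> norm (v b')^2"
    if "a' \<le> b'" "b' \<le> n" for a' b'
    using that
  proof (induction b')
    case 0
    then show ?case by simp
  next
    case (Suc m)
    show ?case
    proof (cases "a' = Suc m")
      case True
      then show ?thesis by simp
    next
      case False
      then have am: "a' \<le> m" using Suc by simp
      have IH: "norm (v a')^2 + 2 * (\<Sum>i\<in>{a'<..m}. eta * (g i)^2) \<le> norm (v m)^2"
        using Suc am by simp
      have st: "norm (v (Suc m))^2 \<ge> norm (v m)^2 + 2*eta*(g (Suc m))^2"
        using step[of "Suc m"] Suc eta_pos by simp
      have "{a'<..Suc m} = insert (Suc m) {a'<..m}" using am by auto
      then have "(\<Sum>i\<in>{a'<..Suc m}. eta * (g i)^2) = eta * (g (Suc m))^2 + (\<Sum>i\<in>{a'<..m}. eta * (g i)^2)"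
        by simp
      then show ?thesis using IH st by linarith
    qed
  qed
  have diff: "v b' - v a' = (\<Sum>i\<in>{a'<..b'}. (eta * g i) *\<^sub>R phi (x i))"
    if "a' \<le> b'" "b' \<le> n" for a' b'
    using that
  proof (induction b')
    case 0
    then show ?case by simp
  next
    case (Suc m)
    show ?case
    proof (cases "a' = Suc m")
      case True
      then show ?thesis by simp
    next
      case False
      then have am: "a' \<le> m" using Suc by simp
      have IH: "v m - v a' = (\<Sum>i\<in>{a'<..m}. (eta * g i) *\<^sub>R phi (x i))"
        using Suc am by simp
      have st: "v (Suc m) = v m + (eta * g (Suc m)) *\<^sub>R phi (x (Suc m))"
        using v_step[of "Suc m"] Suc by (simp add: g_def)
      have "{a'<..Suc m} = insert (Suc m) {a'<..m}" using am by auto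
      then have "(\<Sum>i\<in>{a'<..Suc m}. (eta * g i) *\<^sub>R phi (x i)) = (eta * g (Suc m)) *\<^sub>R phi (x (Suc m)) + (\<Sum>i\<in>{a'<..m}. (eta * g i) *\<^sub>R phi (x i))"
        by simp
      then show ?thesis using IH st by (simp add: algebra_simps)
    qed
  qed
  have key: "norm (P (v b') - P (v a'))^2 \<le> alpha * (\<Sum>i\<in>{a'<..b'}. eta * (g i)^2)"
    if ab': "a' \<le> b'" "b' \<le> n" for a' b'
  proof -
    define z where "z = P (v b') - P (v a')"
    define A where "A = {a'<..b'}"
    define S where "S = (\<Sum>i\<in>A. eta * (g i)^2)"
    have zvs: "z \<bullet> vs = 0" unfolding z_def using Pvs by (simp add: inner_diff_left)
    have "norm z ^2 = z \<bullet> z" by (simp add: dot_square_norm)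
    also have "\<dots> = z \<bullet> P (v b' - v a')" unfolding z_def by (simp add: Pdiff)
    also have "\<dots> = z \<bullet> (v b' - v a')" using Pinner zvs by simp
    also have "\<dots> = (\<Sum>i\<in>A. eta * g i * (z \<bullet> phi (x i)))"
      unfolding diff[OF ab'] A_def by (simp add: inner_sum_right)
    finally have hz: "norm z ^2 = (\<Sum>i\<in>A. eta * g i * (z \<bullet> phi (x i)))" .
    have gapz: "eta * (\<Sum>i=1..n. (z \<bullet> phi (x i))\<^sup>2) \<le> alpha * norm z ^2"
    proof (cases "z = 0")
      case True
      then show ?thesis by simp
    next
      case False
      define w where "w = z /\<^sub>R norm z"
      have nz: "norm z > 0" using False by simp
      have "norm w \<le> 1" unfolding w_def using nz by simp
      moreover have "w \<bullet> vs = 0" unfolding w_def using zvs by simp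
      ultimately have G: "eta * (\<Sum>i=1..n. (w \<bullet> phi (x i))\<^sup>2) \<le> alpha" by (rule gap)
      have "(\<Sum>i=1..n. (w \<bullet> phi (x i))\<^sup>2) = (\<Sum>i=1..n. (z \<bullet> phi (x i))\<^sup>2) / norm z ^2"
        unfolding w_def sum_divide_distrib
        by (rule sum.cong) (simp_all add: power_mult_distrib power_divide divide_inverse power_inverse)
      then have "eta * (\<Sum>i=1..n. (z \<bullet> phi (x i))\<^sup>2) / norm z ^2 \<le> alpha" using G by simp
      then show ?thesis using nz by (simp add: divide_le_eq mult.commute)
    qed
    have sub: "(\<Sum>i\<in>A. eta * (z \<bullet> phi (x i))\<^sup>2) \<le> eta * (\<Sum>i=1..n. (z \<bullet> phi (x i))\<^sup>2)"
    proof -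
      have "(\<Sum>i\<in>A. (z \<bullet> phi (x i))\<^sup>2) \<le> (\<Sum>i=1..n. (z \<bullet> phi (x i))\<^sup>2)"
        by (rule sum_mono2) (use ab' in \<open>auto simp: A_def\<close>)
      then show ?thesis using eta_pos by (simp add: sum_distrib_left[symmetric])
    qed
    have CS: "(\<Sum>i\<in>A. eta * g i * (z \<bullet> phi (x i)))^2 \<le> S * (\<Sum>i\<in>A. eta * (z \<bullet> phi (x i))\<^sup>2)"
    proof -
      have e: "sqrt eta * sqrt eta = eta" "(sqrt eta)^2 = eta" using eta_pos by auto
      have "(\<Sum>i\<in>A. (sqrt eta * g i) * (sqrt eta * (z \<bullet> phi (x i))))^2
          \<le> (\<Sum>i\<in>A. (sqrt eta * g i)^2) * (\<Sum>i\<in>A. (sqrt eta * (z \<bullet> phi (x i)))^2)"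
        by (rule Cauchy_Schwarz_ineq_sum)
      moreover have "(\<Sum>i\<in>A. (sqrt eta * g i) * (sqrt eta * (z \<bullet> phi (x i)))) = (\<Sum>i\<in>A. eta * g i * (z \<bullet> phi (x i)))"
      proof (rule sum.cong)
        fix i
        have "(sqrt eta * g i) * (sqrt eta * (z \<bullet> phi (x i))) = (sqrt eta * sqrt eta) * (g i * (z \<bullet> phi (x i)))"
          by (simp only: mult_ac)
        then show "(sqrt eta * g i) * (sqrt eta * (z \<bullet> phi (x i))) = eta * g i * (z \<bullet> phi (x i))"
          by (simp only: e(1) mult.assoc)
      qed simp
      ultimately show ?thesis unfolding S_def by (simp add: power_mult_distrib e)
    qed
    have S0: "S \<ge> 0" unfolding S_def using eta_pos by (auto intro: sum_nonneg)
    have "(norm z ^2)^2 \<le> S * (alpha * norm z ^2)"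
    proof -
      have "(norm z ^2)^2 \<le> S * (\<Sum>i\<in>A. eta * (z \<bullet> phi (x i))\<^sup>2)" using CS hz by simp
      also have "\<dots> \<le> S * (alpha * norm z ^2)"
        by (rule mult_left_mono[OF order_trans[OF sub gapz] S0])
      finally show ?thesis .
    qed
    then have "norm z ^2 * norm z ^2 \<le> (S * alpha) * norm z ^2" by (simp add: power2_eq_square algebra_simps)
    then have "norm z ^2 \<le> S * alpha"
    proof (cases "norm z ^2 = 0")
      case True
      then show ?thesis using S0 alpha_pos by simp
    next
      case False
      then have "norm z ^2 > 0" by simp
      then show ?thesis using \<open>norm z ^2 * norm z ^2 \<le> (S * alpha) * norm z ^2\<close>
        by (rule mult_right_le_imp_le[rotated])
    qed
    then show ?thesis unfolding z_def S_def A_def by (simp add: mult.commute)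
  qed
  define R where "R = norm (v b)"
  define r where "r = norm (v a)"
  define p where "p = P (v a)"
  define q where "q = P (v b)"
  define S1 where "S1 = (\<Sum>i\<in>{0<..a}. eta * (g i)^2)"
  define S2 where "S2 = (\<Sum>i\<in>{a<..b}. eta * (g i)^2)"
  have S1nn: "S1 \<ge> 0" unfolding S1_def using eta_pos by (auto intro: sum_nonneg)
  have S2nn: "S2 \<ge> 0" unfolding S2_def using eta_pos by (auto intro: sum_nonneg)
  have r2: "1 + 2 * S1 \<le> r^2" using mono[of 0 a] ab bn v0 vs_unit unfolding S1_def r_def by simp
  have R2: "r^2 + 2 * S2 \<le> R^2" using mono[of a b] ab bn unfolding S2_def r_def R_def by simp
  have hp: "norm p ^2 \<le> alpha * S1" using key[of 0 a] ab bn v0 Pvs0 unfolding S1_def p_def by simp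
  have hq: "norm (q - p) ^2 \<le> alpha * S2" using key[of a b] ab bn unfolding S2_def p_def q_def by simp
  have r1: "r \<ge> 1"
  proof (rule power2_le_imp_le)
    show "1\<^sup>2 \<le> r\<^sup>2" using r2 S1nn by simp
    show "0 \<le> r" unfolding r_def by simp
  qed
  have rR: "r \<le> R"
  proof (rule power2_le_imp_le)
    show "r\<^sup>2 \<le> R\<^sup>2" using R2 S2nn by simp
    show "0 \<le> R" unfolding R_def by simp
  qed
  have rpos: "r > 0" using r1 by simp
  have Rpos: "R > 0" using rR rpos by simp
  define t where "t = r / R"
  have t0: "0 < t" and t1: "t \<le> 1" using rpos Rpos rR unfolding t_def by auto
  have eqv: "proj_perp vs (unit_dir (v b)) - proj_perp vs (unit_dir (v a))
      = (1/R) *\<^sub>R (q - p) + (1/R - 1/r) *\<^sub>R p"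
    unfolding unit_dir_def P_def[symmetric] R_def[symmetric] r_def[symmetric] p_def q_def
    by (simp add: Pscale divide_inverse algebra_simps)
  define X where "X = norm (q - p) / R"
  define Y where "Y = (1/r - 1/R) * norm p"
  have nrm: "norm (proj_perp vs (unit_dir (v b)) - proj_perp vs (unit_dir (v a))) \<le> X + Y"
  proof -
    have "norm ((1/R) *\<^sub>R (q - p) + (1/R - 1/r) *\<^sub>R p) \<le> norm ((1/R) *\<^sub>R (q - p)) + norm ((1/R - 1/r) *\<^sub>R p)"
      by (rule norm_triangle_ineq)
    also have "norm ((1/R) *\<^sub>R (q - p)) = X" unfolding X_def using Rpos by simp
    also have "norm ((1/R - 1/r) *\<^sub>R p) = Y"
    proof -
      have "1/R \<le> 1/r" using rpos rR by (simp add: frac_le)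
      then show ?thesis unfolding Y_def by simp
    qed
    finally show ?thesis using eqv by simp
  qed
  have X0: "X \<ge> 0" unfolding X_def using Rpos by simp
  have Y0: "Y \<ge> 0" unfolding Y_def using rpos rR by (simp add: frac_le)
  have X2: "X^2 \<le> alpha * (1 - t^2) / 2"
  proof -
    have "X^2 = norm (q - p)^2 / R^2" unfolding X_def by (simp add: power_divide)
    also have "\<dots> \<le> alpha * S2 / R^2" using hq Rpos by (simp add: divide_right_mono)
    also have "\<dots> \<le> alpha * ((R^2 - r^2)/2) / R^2"
      using R2 alpha_pos Rpos by (intro divide_right_mono mult_left_mono) auto
    also have "\<dots> = alpha * (1 - t^2) / 2" unfolding t_def using Rpos by (simp add: field_simps)
    finally show ?thesis .
  qed
  have Y2: "Y^2 \<le> alpha * (1 - t^2) / 2"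
  proof -
    have "Y = (norm p / r) * (1 - t)" unfolding Y_def t_def using rpos Rpos by (simp add: field_simps)
    then have "Y^2 = (norm p ^2 / r^2) * (1 - t)^2" by (simp add: power_mult_distrib power_divide)
    also have "\<dots> \<le> (alpha / 2) * (1 - t)^2"
    proof (rule mult_right_mono)
      have "norm p ^2 \<le> alpha * (r^2 / 2)" 
      proof -
        have "S1 \<le> r^2 / 2" using r2 by simp
        then have "alpha * S1 \<le> alpha * (r^2 / 2)" using alpha_pos by (intro mult_left_mono) auto
        then show ?thesis using hp by linarith
      qed
      then show "norm p ^2 / r^2 \<le> alpha / 2" using rpos by (simp add: divide_le_eq field_simps)
    qed simp
    also have "\<dots> \<le> (alpha / 2) * (1 - t^2)"
      using t0 t1 alpha_pos by (intro mult_left_mono) (auto simp: power2_eq_square algebra_simps)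
    finally show ?thesis by simp
  qed
  have lnb: "1 - t^2 \<le> 2 * ln (R / r)"
  proof -
    have "ln (t^2) \<le> t^2 - 1" using t0 by (intro ln_le_minus_one) simp
    moreover have "ln (t^2) = - 2 * ln (R / r)"
      unfolding t_def using rpos Rpos by (simp add: ln_div ln_mult power2_eq_square)
    ultimately show ?thesis by simp
  qed
  have "(norm (proj_perp vs (unit_dir (v b)) - proj_perp vs (unit_dir (v a))))\<^sup>2 \<le> (X + Y)^2"
    using nrm by (intro power_mono) auto
  also have "\<dots> \<le> 2 * X^2 + 2 * Y^2"
  proof -
    have "(X + Y)^2 + (X - Y)^2 = 2 * X^2 + 2 * Y^2" by (simp add: power2_eq_square algebra_simps)
    moreover have "(X - Y)^2 \<ge> 0" by simp
    ultimately show ?thesis by linarith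
  qed
  also have "\<dots> \<le> 2 * alpha * (1 - t^2)" using X2 Y2 by simp
  also have "\<dots> \<le> 2 * alpha * (2 * ln (R / r))" using lnb alpha_pos by simp
  also have "\<dots> \<le> 50 * alpha * ln (R / r)" 
  proof -
    have "ln (R / r) \<ge> 0" using rR rpos by simp
    then have "alpha * ln (R / r) \<ge> 0" using alpha_pos by simp
    then show ?thesis by linarith
  qed
  finally show ?thesis unfolding R_def r_def .

qed

end
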